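(* Let $m\ge1$ be an integer, $b>0$, $c>0$, and let $\alpha_1,\alpha_2,\ldots$ be independent identically distributed nonnegative random variables with finite expected value $a=\mathsf{E}\alpha_1$ and finite variance. Define $x(k)=y(k)=0$ for all integers $k\le0$ and, for $k=1,2,\ldots$, \[ x(k)=x(k-1)+\alpha_k,\qquad y(k)=\max\bigl(x(k),\,y(k-1),\,y(k-m)+c\bigr)+b. \] Then the mean cycle time $\lambda=\lim_{k\to\infty}y(k)/k$ exists with probability one (and also equals $\lim_{k\to\infty}\mathsf{E}\,y(k)/k$), and \[ \lambda=\max\bigl(a,\;b,\;(b+c)/m\bigr). \]
   Context: Interpretation (not needed for the mathematics): this is a queueing model of a battery swapping and charging station with $m$ battery packs, where $x(k)$ is the arrival time of the $k$th electric vehicle, $\alpha_k$ the interarrival times, $b$ the swapping time of one pack, $c$ the charging time of one pack, and $y(k)$ the completion time of the $k$th swap. *)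

theory Defs
  imports "HOL-Probability.Probability"
begin

primrec xarr :: "(nat \<Rightarrow> real) \<Rightarrow> nat \<Rightarrow> real" where
  "xarr \<alpha> 0 = 0"
| "xarr \<alpha> (Suc k) = xarr \<alpha> k + \<alpha> (Suc k)"

text \<open>Completion times: y(k) = 0 for k <= 0 and
  y(k) = max(x(k), y(k-1), y(k-m) + c) + b for k >= 1.
  For k+1 <= m the index k+1-m is <= 0, so y(k+1-m) = 0.
  Otherwise (and m >= 1) the index k+1-m equals k - (m-1).\<close>
fun ycomp :: "nat \<Rightarrow> real \<Rightarrow> real \<Rightarrow> (nat \<Rightarrow> real) \<Rightarrow> nat \<Rightarrow> real" where
  "ycomp m b c \<alpha> 0 = 0"
| "ycomp m b c \<alpha> (Suc k) =
     max (max (xarr \<alpha> (Suc k)) (ycomp m b c \<alpha> k))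
         ((if Suc k \<le> m then 0 else ycomp m b c \<alpha> (k - (m - 1))) + c) + b"

end

theory Submission
  imports Defs
begin

lemma xarr_sum: "xarr a k = (\<Sum>i\<in>{1..k}. a i)"
  by (induction k) (auto simp: sum.cl_ivl_Suc add.commute)

lemma y_ge_prev: "ycomp m b c a k + b \<le> ycomp m b c a (Suc k)"
  by simp

lemma y_ge_x: "xarr a (Suc k) + b \<le> ycomp m b c a (Suc k)"
  by simp

lemma y_ge_kb: "real k * b \<le> ycomp m b c a k"
proof (induction k)
  case 0 then show ?case by simp
next
  case (Suc k)
  have "ycomp m b c a k + b \<le> ycomp m b c a (Suc k)" by (rule y_ge_prev)
  with Suc show ?case by (simp add: algebra_simps)
qed

lemma y_ge_div:
  assumes "m \<ge> 1" "b > 0" "c > 0"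
  shows "real (k div m) * (b + c) \<le> ycomp m b c a k"
proof (induction k rule: less_induct)
  case (less k)
  show ?case
  proof (cases "k < m")
    case True
    then show ?thesis using y_ge_kb[of k b m c a] assms
      by (simp add: order_trans[OF _ y_ge_kb[of k b m c a]])
  next
    case False
    then obtain k' where k': "k = Suc k'" using assms by (cases k) auto
    show ?thesis
    proof (cases "Suc k' \<le> m")
      case True
      then have "k = m" using False k' by simp
      then have "k div m = 1" using assms by simp
      moreover have "0 + c + b \<le> ycomp m b c a k" using True k' by simp
      ultimately show ?thesis by simp
    next
      case F2: False
      have km: "k' - (m - 1) = k - m" using k' F2 assms by arith
      have "ycomp m b c a (k' - (m - 1)) + c + b \<le> ycomp m b c a k" using F2 k' by simp
      moreover have "real ((k - m) div m) * (b + c) \<le> ycomp m b c a (k - m)"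
        using less assms F2 k' by simp
      moreover have "k div m = (k - m) div m + 1" using False assms
        by (simp add: le_div_geq)
      ultimately show ?thesis using km by (simp add: algebra_simps)
    qed
  qed
qed

lemma y_upper:
  assumes "m \<ge> 1" "b > 0" "c > 0" "L \<ge> b" "L * real m \<ge> b + c" "C \<ge> 0"
    and xb: "\<And>j. xarr a j \<le> L * real j + C"
  shows "ycomp m b c a k \<le> L * real k + C + b + c"
proof (induction k rule: less_induct)
  case (less k)
  show ?case
  proof (cases k)
    case 0 then show ?thesis using assms by simp
  next
    case (Suc k')
    have L0: "L \<ge> 0" using assms by simp
    have A: "xarr a (Suc k') \<le> L * real (Suc k') + C + b + c - b - c" using xb[of "Suc k'"] by simp
    have B: "ycomp m b c a k' + b \<le> L * real (Suc k') + C + b + c"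
      using less[of k'] Suc assms by (simp add: algebra_simps)
    have D: "(if Suc k' \<le> m then 0 else ycomp m b c a (k' - (m - 1))) + c + b \<le> L * real (Suc k') + C + b + c"
    proof (cases "Suc k' \<le> m")
      case True then show ?thesis using L0 assms by simp
    next
      case False
      have r: "real (k' - (m - 1)) = real k' + 1 - real m" using False assms by (simp add: of_nat_diff)
      have "ycomp m b c a (k' - (m - 1)) \<le> L * real (k' - (m - 1)) + C + b + c"
        using less[of "k' - (m - 1)"] Suc False by simp
      then show ?thesis using False r assms by (simp add: algebra_simps)
    qed
    show ?thesis using A B D Suc assms by simp
  qed
qed

lemma y_upper2:
  assumes "m \<ge> 1" "b > 0" "c > 0" "L \<ge> b" "L * real m \<ge> b + c"
    and nn: "\<And>i. i \<ge> 1 \<Longrightarrow> a i \<ge> 0"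
  shows "ycomp m b c a k \<le> xarr a k + L * real k + b + c"
proof (induction k rule: less_induct)
  case (less k)
  have xmono: "xarr a i \<le> xarr a j" if "i \<le> j" for i j
    using that
  proof (induction j)
    case 0 then show ?case by simp
  next
    case (Suc j) then show ?case using nn[of "Suc j"] by (cases "i = Suc j") auto
  qed
  have xnn: "xarr a j \<ge> 0" for j using xmono[of 0 j] by simp
  show ?case
  proof (cases k)
    case 0 then show ?thesis using assms by simp
  next
    case (Suc k')
    have L0: "L \<ge> 0" using assms by simp
    have A: "xarr a (Suc k') \<le> xarr a (Suc k') + L * real (Suc k') + b + c - b - c" using L0 by simp
    have B: "ycomp m b c a k' + b \<le> xarr a (Suc k') + L * real (Suc k') + b + c"
      proof -
      have h1: "a (Suc k') \<ge> 0" using nn by simp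
      have h2: "ycomp m b c a k' \<le> xarr a k' + L * real k' + b + c" using less[of k'] Suc by simp
      show ?thesis using h1 h2 assms(4) by (simp add: algebra_simps)
    qed
    have D: "(if Suc k' \<le> m then 0 else ycomp m b c a (k' - (m - 1))) + c + b \<le> xarr a (Suc k') + L * real (Suc k') + b + c"
    proof (cases "Suc k' \<le> m")
      case True
      have "0 \<le> L * real (Suc k')" using L0 by simp
      then show ?thesis using xnn[of "Suc k'"] True by simp
    next
      case False
      have r: "real (k' - (m - 1)) = real k' + 1 - real m" using False assms by (simp add: of_nat_diff)
      have "ycomp m b c a (k' - (m - 1)) \<le> xarr a (k' - (m - 1)) + L * real (k' - (m - 1)) + b + c"
        using less[of "k' - (m - 1)"] Suc False by simp
      moreover have "xarr a (k' - (m - 1)) \<le> xarr a (Suc k')" by (rule xmono) simp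
      ultimately show ?thesis using False r assms by (simp add: algebra_simps)
    qed
    show ?thesis using A B D Suc assms by simp
  qed
qed

lemma det_limit:
  assumes m1: "m \<ge> 1" and b0: "b > 0" and c0: "c > 0"
    and lim: "(\<lambda>k. xarr a k / real k) \<longlonglongrightarrow> A"
  shows "(\<lambda>k. ycomp m b c a k / real k) \<longlonglongrightarrow> max A (max b ((b + c) / real m))"
proof (rule order_tendstoI)
  fix z assume z: "z < max A (max b ((b + c) / real m))"
  have c0': "(\<lambda>k. (b + c) / real k) \<longlonglongrightarrow> 0" by (rule lim_const_over_n)
  have "(\<lambda>k. max (xarr a k / real k) (max b ((b + c) / real m - (b + c) / real k)))
      \<longlonglongrightarrow> max A (max b ((b + c) / real m - 0))"
    by (intro tendsto_max tendsto_diff lim c0' tendsto_const)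
  then have "eventually (\<lambda>k. z < max (xarr a k / real k) (max b ((b + c) / real m - (b + c) / real k))) sequentially"
    using z by (intro order_tendstoD) auto
  moreover have "eventually (\<lambda>k. max (xarr a k / real k) (max b ((b + c) / real m - (b + c) / real k))
      \<le> ycomp m b c a k / real k) sequentially"
    using eventually_ge_at_top[of 1]
  proof eventually_elim
    case (elim k)
    then obtain k' where k': "k = Suc k'" by (cases k) auto
    have kp: "real k > 0" using elim by simp
    have "xarr a k + b \<le> ycomp m b c a k" using y_ge_x k' by simp
    then have 1: "xarr a k / real k \<le> ycomp m b c a k / real k"
      using kp b0 by (intro divide_right_mono) auto
    have "real k * b \<le> ycomp m b c a k" by (rule y_ge_kb)
    then have 2: "b \<le> ycomp m b c a k / real k" using kp by (simp add: field_simps)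
    have h1: "m * (k div m) + k mod m = k" by (rule mult_div_mod_eq)
    have h2: "k mod m < m" using m1 by simp
    have "k < m * (k div m) + m" using h1 h2 by linarith
    then have "real k < real (m * (k div m) + m)" by (simp only: of_nat_less_iff)
    then have "real k < real m * (real (k div m) + 1)" by (simp add: algebra_simps)
    then have "real k / real m - 1 \<le> real (k div m)" using m1 by (simp add: field_simps)
    then have "(real k / real m - 1) * (b + c) \<le> real (k div m) * (b + c)"
      using b0 c0 by (intro mult_right_mono) auto
    also have "\<dots> \<le> ycomp m b c a k" using y_ge_div m1 b0 c0 by blast
    finally have "(real k / real m - 1) * (b + c) / real k \<le> ycomp m b c a k / real k"
      using kp by (intro divide_right_mono) auto
    moreover have "(real k / real m - 1) * (b + c) / real k = (b + c) / real m - (b + c) / real k"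
      using kp m1 by (simp add: field_simps)
    ultimately have 3: "(b + c) / real m - (b + c) / real k \<le> ycomp m b c a k / real k" by simp
    show ?case using 1 2 3 by simp
  qed
  ultimately show "eventually (\<lambda>k. z < ycomp m b c a k / real k) sequentially"
    by (rule eventually_elim2) (rule less_le_trans)
next
  fix z assume z: "max A (max b ((b + c) / real m)) < z"
  define e where "e = z - max A (max b ((b + c) / real m))"
  have e0: "e > 0" using z by (simp add: e_def)
  have "eventually (\<lambda>k. xarr a k / real k < A + e / 2) sequentially"
    using lim e0 by (intro order_tendstoD) auto
  then obtain N where N: "\<And>j. j \<ge> N \<Longrightarrow> xarr a j / real j < A + e / 2"
    by (auto simp: eventually_sequentially)
  define C where "C = (\<Sum>j<N. \<bar>xarr a j\<bar>)"
  define L where "L = max (A + e / 2) (max b ((b + c) / real m))"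
  have C0: "C \<ge> 0" unfolding C_def by (intro sum_nonneg) auto
  have Lb: "L \<ge> b" unfolding L_def by simp
  have L0: "L \<ge> 0" using Lb b0 by simp
  have Lm: "L * real m \<ge> b + c"
  proof -
    have "(b + c) / real m \<le> L" unfolding L_def by simp
    then show ?thesis using m1 by (simp add: field_simps)
  qed
  have xb: "xarr a j \<le> L * real j + C" for j
  proof (cases "j < N")
    case True
    have "xarr a j \<le> \<bar>xarr a j\<bar>" by simp
    also have "\<dots> \<le> C" unfolding C_def using True
      by (intro member_le_sum) auto
    finally show ?thesis using L0 by (simp add: add_increasing)
  next
    case False
    show ?thesis
    proof (cases "j = 0")
      case True then show ?thesis using C0 by simp
    next
      case j0: False
      have "xarr a j / real j < A + e / 2" using N False by simp
      then have "xarr a j < (A + e / 2) * real j" using j0 by (simp add: field_simps)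
      also have "\<dots> \<le> L * real j" unfolding L_def by (intro mult_right_mono) auto
      finally show ?thesis using C0 by simp
    qed
  qed
  have yb: "ycomp m b c a k \<le> L * real k + C + b + c" for k
    by (rule y_upper[OF m1 b0 c0 Lb Lm C0 xb])
  have Lz: "L + e / 2 \<le> z"
  proof -
    define M' where "M' = max A (max b ((b + c) / real m))"
    have 1: "A + e / 2 \<le> M' + e / 2" unfolding M'_def by simp
    have "max b ((b + c) / real m) \<le> M'" unfolding M'_def by simp
    then have 2: "max b ((b + c) / real m) \<le> M' + e / 2" using e0 by linarith
    have "L \<le> M' + e / 2" unfolding L_def using 1 2 by (rule max.boundedI)
    moreover have "z = M' + e" unfolding e_def M'_def by simp
    ultimately show ?thesis by linarith
  qed
  have "eventually (\<lambda>k. (C + b + c) / real k < e / 2) sequentially"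
    using lim_const_over_n[of "C + b + c"] e0 by (intro order_tendstoD) auto
  then show "eventually (\<lambda>k. ycomp m b c a k / real k < z) sequentially"
    using eventually_ge_at_top[of 1]
  proof eventually_elim
    case (elim k)
    have kp: "real k > 0" using elim by simp
    have "ycomp m b c a k / real k \<le> (L * real k + C + b + c) / real k"
      using yb kp by (intro divide_right_mono) auto
    also have "\<dots> = L + (C + b + c) / real k" using kp by (simp add: field_simps)
    also have "\<dots> < L + e / 2" using elim by simp
    also have "\<dots> \<le> z" by (rule Lz)
    finally show ?case .
  qed
qed

lemma sq_sandwich:
  fixes S :: "nat \<Rightarrow> real"
  assumes mono: "\<And>i j. i \<le> j \<Longrightarrow> S i \<le> S j" and nn: "\<And>i. S i \<ge> 0"
    and lim: "(\<lambda>n. S (n ^ 2) / real (n ^ 2)) \<longlonglongrightarrow> A"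
  shows "(\<lambda>k. S k / real k) \<longlonglongrightarrow> A"
proof -
  have ex: "\<exists>n. n ^ 2 \<le> k \<and> k < (Suc n) ^ 2" for k
  proof (induction k)
    case 0 then show ?case by simp
  next
    case (Suc k)
    then obtain n where n: "n ^ 2 \<le> k" "k < (Suc n) ^ 2" by blast
    show ?case
    proof (cases "Suc k < (Suc n) ^ 2")
      case True then show ?thesis using n by (intro exI[of _ n]) auto
    next
      case False
      then have "Suc k = (Suc n) ^ 2" using n by simp
      moreover have "(Suc n) ^ 2 < (Suc (Suc n)) ^ 2" by (intro power_strict_mono) auto
      ultimately show ?thesis by (intro exI[of _ "Suc n"]) auto
    qed
  qed
  define s where "s k = (SOME n. n ^ 2 \<le> k \<and> k < (Suc n) ^ 2)" for k
  have s: "s k ^ 2 \<le> k" "k < (Suc (s k)) ^ 2" for k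
    using someI_ex[OF ex[of k]] unfolding s_def by auto
  have s_top: "filterlim s at_top sequentially"
    unfolding filterlim_at_top
  proof
    fix Z
    show "eventually (\<lambda>k. Z \<le> s k) sequentially"
      unfolding eventually_sequentially
    proof (intro exI allI impI)
      fix k assume "Z ^ 2 \<le> k"
      then have "Z ^ 2 < (Suc (s k)) ^ 2" using s(2)[of k] by simp
      then have "Z < Suc (s k)" using power_less_imp_less_base by blast
      then show "Z \<le> s k" by simp
    qed
  qed
  define T where "T n = S (n ^ 2) / real (n ^ 2)" for n
  have r1: "(\<lambda>n. real (Suc n) ^ 2 / real n ^ 2) \<longlonglongrightarrow> 1"
  proof -
    have "(\<lambda>n. (1 + inverse (real n)) ^ 2) \<longlonglongrightarrow> (1 + 0) ^ 2"
      by (intro tendsto_intros lim_inverse_n)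
    moreover have "eventually (\<lambda>n. (1 + inverse (real n)) ^ 2 = real (Suc n) ^ 2 / real n ^ 2) sequentially"
      using eventually_ge_at_top[of 1]
      by eventually_elim (simp add: field_simps power2_eq_square)
    ultimately show ?thesis by (simp add: tendsto_cong)
  qed
  have r2: "(\<lambda>n. real n ^ 2 / real (Suc n) ^ 2) \<longlonglongrightarrow> 1"
  proof -
    have "(\<lambda>n. inverse (real (Suc n) ^ 2 / real n ^ 2)) \<longlonglongrightarrow> inverse 1"
      by (intro tendsto_inverse r1) auto
    then show ?thesis by simp
  qed
  define U where "U n = T (Suc n) * (real (Suc n) ^ 2 / real n ^ 2)" for n
  define Lo where "Lo n = T n * (real n ^ 2 / real (Suc n) ^ 2)" for n
  have TU: "T \<longlonglongrightarrow> A" using lim unfolding T_def .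
  have "U \<longlonglongrightarrow> A * 1" unfolding U_def
    by (intro tendsto_mult r1) (use TU LIMSEQ_Suc in blast)
  then have U: "(\<lambda>k. U (s k)) \<longlonglongrightarrow> A" using filterlim_compose[OF _ s_top] by simp
  have "Lo \<longlonglongrightarrow> A * 1" unfolding Lo_def by (intro tendsto_mult r2 TU)
  then have Lo: "(\<lambda>k. Lo (s k)) \<longlonglongrightarrow> A" using filterlim_compose[OF _ s_top] by simp
  show ?thesis
  proof (rule tendsto_sandwich[OF _ _ Lo U])
    show "eventually (\<lambda>k. Lo (s k) \<le> S k / real k) sequentially"
      using eventually_ge_at_top[of 1]
    proof eventually_elim
      case (elim k)
      let ?n = "s k"
      have kp: "real k > 0" using elim by simp
      have np: "?n > 0" using s(2)[of k] elim by (cases "s k") auto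
      have "Lo ?n = S (?n ^ 2) / real (Suc ?n) ^ 2"
        unfolding Lo_def T_def using np by (simp add: field_simps)
      also have "\<dots> \<le> S k / real (Suc ?n) ^ 2"
        using mono[OF s(1)[of k]] by (intro divide_right_mono) auto
      also have "\<dots> \<le> S k / real k"
      proof (intro divide_left_mono nn)
        have "k < (Suc ?n) ^ 2" by (rule s(2))
        then have "real k < real ((Suc ?n) ^ 2)" by linarith
        then show "real k \<le> real (Suc ?n) ^ 2" by simp
      qed (use kp in auto)
      finally show ?case .
    qed
    show "eventually (\<lambda>k. S k / real k \<le> U (s k)) sequentially"
      using eventually_ge_at_top[of 1]
    proof eventually_elim
      case (elim k)
      let ?n = "s k"
      have np: "?n > 0" using s(2)[of k] elim by (cases "s k") auto
      have sk: "real (?n ^ 2) \<le> real k" using s(1)[of k] by linarith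
      have "S k / real k \<le> S k / real ?n ^ 2"
        using np sk elim by (intro divide_left_mono nn) auto
      also have "\<dots> \<le> S ((Suc ?n) ^ 2) / real ?n ^ 2"
        using mono[OF less_imp_le[OF s(2)[of k]]] by (intro divide_right_mono) auto
      also have "\<dots> = U ?n"
        unfolding U_def T_def using np by (simp add: field_simps)
      finally show ?case .
    qed
  qed
qed

lemma (in prob_space) sum_sq_moment:
  fixes X :: "nat \<Rightarrow> 'a \<Rightarrow> real" and I :: "nat set"
  assumes fin: "finite I"
    and ind: "indep_vars (\<lambda>_. borel) X I"
    and int1: "\<And>i. i \<in> I \<Longrightarrow> integrable M (X i)"
    and int2: "\<And>i. i \<in> I \<Longrightarrow> integrable M (\<lambda>\<omega>. (X i \<omega>)\<^sup>2)"
    and mean0: "\<And>i. i \<in> I \<Longrightarrow> expectation (X i) = 0"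
  shows "integrable M (\<lambda>\<omega>. (\<Sum>i\<in>I. X i \<omega>)\<^sup>2)"
    and "expectation (\<lambda>\<omega>. (\<Sum>i\<in>I. X i \<omega>)\<^sup>2) = (\<Sum>i\<in>I. expectation (\<lambda>\<omega>. (X i \<omega>)\<^sup>2))"
proof -
  have eq: "(\<lambda>\<omega>. (\<Sum>i\<in>I. X i \<omega>)\<^sup>2) = (\<lambda>\<omega>. \<Sum>i\<in>I. \<Sum>j\<in>I. X i \<omega> * X j \<omega>)"
    by (simp add: power2_eq_square sum_product)
  have pint: "integrable M (\<lambda>\<omega>. X i \<omega> * X j \<omega>) \<and>
      expectation (\<lambda>\<omega>. X i \<omega> * X j \<omega>) = (if i = j then expectation (\<lambda>\<omega>. (X i \<omega>)\<^sup>2) else 0)"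
    if ij: "i \<in> I" "j \<in> I" for i j
  proof (cases "i = j")
    case True
    then show ?thesis using int2[OF ij(1)] by (simp add: power2_eq_square)
  next
    case False
    have ind2: "indep_vars (\<lambda>_. borel) X {i, j}"
      by (rule indep_vars_subset[OF ind]) (use ij in auto)
    have pr: "(\<lambda>\<omega>. \<Prod>k\<in>{i, j}. X k \<omega>) = (\<lambda>\<omega>. X i \<omega> * X j \<omega>)"
      using False by simp
    have "integrable M (\<lambda>\<omega>. \<Prod>k\<in>{i, j}. X k \<omega>)"
      by (rule indep_vars_integrable) (use ind2 int1 ij in auto)
    moreover have "expectation (\<lambda>\<omega>. \<Prod>k\<in>{i, j}. X k \<omega>) = (\<Prod>k\<in>{i, j}. expectation (X k))"
      by (rule indep_vars_lebesgue_integral) (use ind2 int1 ij in auto)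
    ultimately show ?thesis using pr False mean0 ij by simp
  qed
  show "integrable M (\<lambda>\<omega>. (\<Sum>i\<in>I. X i \<omega>)\<^sup>2)"
    unfolding eq using pint by (intro Bochner_Integration.integrable_sum) auto
  have "expectation (\<lambda>\<omega>. \<Sum>i\<in>I. \<Sum>j\<in>I. X i \<omega> * X j \<omega>)
      = (\<Sum>i\<in>I. \<Sum>j\<in>I. expectation (\<lambda>\<omega>. X i \<omega> * X j \<omega>))"
    using pint by (simp add: Bochner_Integration.integral_sum Bochner_Integration.integrable_sum)
  also have "\<dots> = (\<Sum>i\<in>I. \<Sum>j\<in>I. (if i = j then expectation (\<lambda>\<omega>. (X i \<omega>)\<^sup>2) else 0))"
    using pint by (intro sum.cong refl) auto
  also have "\<dots> = (\<Sum>i\<in>I. expectation (\<lambda>\<omega>. (X i \<omega>)\<^sup>2))"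
    using fin by (simp add: sum.delta)
  finally show "expectation (\<lambda>\<omega>. (\<Sum>i\<in>I. X i \<omega>)\<^sup>2) = (\<Sum>i\<in>I. expectation (\<lambda>\<omega>. (X i \<omega>)\<^sup>2))"
    unfolding eq .
qed

lemma (in prob_space) slln_sq:
  fixes \<alpha> :: "nat \<Rightarrow> 'a \<Rightarrow> real"
  assumes meas: "\<And>i. i \<ge> 1 \<Longrightarrow> \<alpha> i \<in> borel_measurable M"
    and ind: "indep_vars (\<lambda>_. borel) \<alpha> {1..}"
    and int1: "\<And>i. i \<ge> 1 \<Longrightarrow> integrable M (\<alpha> i)"
    and int2: "\<And>i. i \<ge> 1 \<Longrightarrow> integrable M (\<lambda>\<omega>. (\<alpha> i \<omega>)\<^sup>2)"
    and mean: "\<And>i. i \<ge> 1 \<Longrightarrow> expectation (\<alpha> i) = a"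
    and var: "\<And>i. i \<ge> 1 \<Longrightarrow> expectation (\<lambda>\<omega>. (\<alpha> i \<omega> - a)\<^sup>2) = v"
  shows "AE \<omega> in M. (\<lambda>n. (\<Sum>i\<in>{1..n^2}. \<alpha> i \<omega>) / real (n^2)) \<longlonglongrightarrow> a"
proof -
  define Y where "Y i \<omega> = \<alpha> i \<omega> - a" for i \<omega>
  have indY: "indep_vars (\<lambda>_. borel) Y {1..}"
    unfolding Y_def by (rule indep_vars_compose2[OF ind]) auto
  have intY: "integrable M (Y i)" if "i \<ge> 1" for i
    unfolding Y_def using int1[OF that] by auto
  have intY2: "integrable M (\<lambda>\<omega>. (Y i \<omega>)\<^sup>2)" if "i \<ge> 1" for i
    unfolding Y_def power2_diff using int1[OF that] int2[OF that]
    by (intro Bochner_Integration.integrable_diff Bochner_Integration.integrable_add) auto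
  have meanY: "expectation (Y i) = 0" if "i \<ge> 1" for i
    unfolding Y_def using int1[OF that] mean[OF that] by (simp add: prob_space)
  define S where "S n \<omega> = (\<Sum>i\<in>{1..n}. \<alpha> i \<omega>) - real n * a" for n \<omega>
  have SY: "S n \<omega> = (\<Sum>i\<in>{1..n}. Y i \<omega>)" for n \<omega>
    unfolding S_def Y_def by (simp add: sum_subtractf)
  have measS[measurable]: "S n \<in> borel_measurable M" for n
    unfolding S_def by (intro borel_measurable_diff borel_measurable_sum meas borel_measurable_const) auto
  have intS2: "integrable M (\<lambda>\<omega>. (S n \<omega>)\<^sup>2)" and ES2: "expectation (\<lambda>\<omega>. (S n \<omega>)\<^sup>2) = real n * v" for n
  proof -
    have ind': "indep_vars (\<lambda>_. borel) Y {1..n}" by (rule indep_vars_subset[OF indY]) auto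
    note r = sum_sq_moment[of "{1..n}" Y, OF _ ind']
    show "integrable M (\<lambda>\<omega>. (S n \<omega>)\<^sup>2)" unfolding SY
      by (rule r(1)) (auto intro: intY intY2 meanY)
    have "expectation (\<lambda>\<omega>. (S n \<omega>)\<^sup>2) = (\<Sum>i\<in>{1..n}. expectation (\<lambda>\<omega>. (Y i \<omega>)\<^sup>2))" unfolding SY
      by (rule r(2)) (auto intro: intY intY2 meanY)
    also have "\<dots> = (\<Sum>i\<in>{1..n}. v)" using var by (intro sum.cong) (auto simp: Y_def)
    finally show "expectation (\<lambda>\<omega>. (S n \<omega>)\<^sup>2) = real n * v" by simp
  qed
  have intS: "integrable M (S n)" for n
    unfolding SY by (intro Bochner_Integration.integrable_sum intY) auto
  have ES: "expectation (S n) = 0" for n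
    unfolding SY using intY meanY by (simp add: Bochner_Integration.integral_sum)
  have cheb: "prob {\<omega>\<in>space M. t \<le> \<bar>S n \<omega>\<bar>} \<le> real n * v / t\<^sup>2" if "t > 0" for n t
    using Chebyshev_inequality[OF measS intS2 that, of n] ES ES2 by simp
  have main: "AE \<omega> in M. eventually (\<lambda>n. \<bar>S ((Suc n)^2) \<omega>\<bar> < e * real ((Suc n)^2)) sequentially"
    if e: "e > 0" for e
  proof -
    define A where "A n = {\<omega>\<in>space M. e * real ((Suc n)^2) \<le> \<bar>S ((Suc n)^2) \<omega>\<bar>}" for n
    have Asets: "A n \<in> sets M" for n unfolding A_def by measurable
    have Aprob: "measure M (A n) \<le> (v / e\<^sup>2) * inverse (real (Suc n) ^ 2)" for n
    proof -
      have pos: "e * real ((Suc n)^2) > 0" using e by simp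
      have "measure M (A n) \<le> real ((Suc n)^2) * v / (e * real ((Suc n)^2))\<^sup>2"
        unfolding A_def by (rule cheb[OF pos])
      also have "\<dots> = (v / e\<^sup>2) * inverse (real (Suc n) ^ 2)"
      proof -
        have g: "q * v / (e * q)\<^sup>2 = (v / e\<^sup>2) * inverse q" if "q > 0" for q :: real
          using e that by (simp add: field_simps power2_eq_square)
        show ?thesis using g[of "real (Suc n) ^ 2"] by (simp add: of_nat_power)
      qed
      finally show ?thesis .
    qed
    have summ: "summable (\<lambda>n. (v / e\<^sup>2) * inverse (real (Suc n) ^ 2))"
    proof -
      have "summable (\<lambda>n. inverse (real n ^ 2))" by (rule inverse_power_summable) auto
      then have "summable (\<lambda>n. inverse (real (Suc n) ^ 2))"
        by (subst summable_Suc_iff)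
      then show ?thesis by (rule summable_mult)
    qed
    have "summable (\<lambda>n. measure M (A n))"
      proof (rule summable_comparison_test[OF _ summ])
      show "\<exists>N. \<forall>n\<ge>N. norm (measure M (A n)) \<le> (v / e\<^sup>2) * inverse (real (Suc n) ^ 2)"
        using Aprob by (intro exI[of _ 0]) simp
    qed
    then have "AE \<omega> in M. eventually (\<lambda>n. \<omega> \<in> space M - A n) sequentially"
      by (intro borel_cantelli_AE1 Asets) (auto simp: less_top[symmetric])
    then show ?thesis
      by (rule AE_mp) (auto intro!: AE_I2 elim!: eventually_mono simp: A_def not_le)
  qed
  have "AE \<omega> in M. \<forall>r::nat. eventually (\<lambda>n. \<bar>S ((Suc n)^2) \<omega>\<bar> < inverse (real (Suc r)) * real ((Suc n)^2)) sequentially"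
    unfolding AE_all_countable by (intro allI main) simp
  then show ?thesis
  proof (rule AE_mp[OF _ AE_I2], intro impI)
    fix \<omega> assume H: "\<forall>r::nat. eventually (\<lambda>n. \<bar>S ((Suc n)^2) \<omega>\<bar> < inverse (real (Suc r)) * real ((Suc n)^2)) sequentially"
    have "(\<lambda>n. (\<Sum>i\<in>{1..(Suc n)^2}. \<alpha> i \<omega>) / real ((Suc n)^2)) \<longlonglongrightarrow> a"
      unfolding LIMSEQ_iff
    proof (intro allI impI)
      fix r :: real assume "r > 0"
      then obtain k where k: "inverse (real (Suc k)) < r" using reals_Archimedean by blast
      from H[rule_format, of k] obtain N where N:
        "\<And>n. n \<ge> N \<Longrightarrow> \<bar>S ((Suc n)^2) \<omega>\<bar> < inverse (real (Suc k)) * real ((Suc n)^2)"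
        by (auto simp: eventually_sequentially)
      show "\<exists>no. \<forall>n\<ge>no. norm ((\<Sum>i\<in>{1..(Suc n)^2}. \<alpha> i \<omega>) / real ((Suc n)^2) - a) < r"
      proof (intro exI allI impI)
        fix n assume "n \<ge> N"
        note b = N[OF this]
        define q where "q = real ((Suc n)^2)"
        have q0: "q > 0" unfolding q_def by simp
        have "(\<Sum>i\<in>{1..(Suc n)^2}. \<alpha> i \<omega>) / real ((Suc n)^2) - a = S ((Suc n)^2) \<omega> / q"
          unfolding S_def q_def[symmetric] using q0 by (simp add: field_simps)
        moreover have "\<bar>S ((Suc n)^2) \<omega> / q\<bar> < inverse (real (Suc k))"
          using b q0 unfolding q_def[symmetric] by (simp add: abs_div pos_divide_less_eq)
        ultimately show "norm ((\<Sum>i\<in>{1..(Suc n)^2}. \<alpha> i \<omega>) / real ((Suc n)^2) - a) < r"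
          using k by simp
      qed
    qed
    then show "(\<lambda>n. (\<Sum>i\<in>{1..n^2}. \<alpha> i \<omega>) / real (n^2)) \<longlonglongrightarrow> a"
      by (rule LIMSEQ_imp_Suc)
  qed
qed

lemma ycomp_meas:
  assumes meas: "\<And>i. i \<ge> 1 \<Longrightarrow> \<alpha> i \<in> borel_measurable M"
  shows "(\<lambda>\<omega>. ycomp m b c (\<lambda>i. \<alpha> i \<omega>) k) \<in> borel_measurable M"
proof (induction k rule: less_induct)
  case (less k)
  have xm: "(\<lambda>\<omega>. xarr (\<lambda>i. \<alpha> i \<omega>) j) \<in> borel_measurable M" for j
    unfolding xarr_sum by (intro borel_measurable_sum meas) auto
  show ?case
  proof (cases k)
    case 0 then show ?thesis by simp
  next
    case (Suc k')
    have m1: "(\<lambda>\<omega>. ycomp m b c (\<lambda>i. \<alpha> i \<omega>) k') \<in> borel_measurable M" using less Suc by simp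
    show ?thesis
    proof (cases "Suc k' \<le> m")
      case True
      show ?thesis unfolding Suc ycomp.simps if_P[OF True]
        by (intro borel_measurable_add borel_measurable_max borel_measurable_const m1 xm)
    next
      case False
      have m2: "(\<lambda>\<omega>. ycomp m b c (\<lambda>i. \<alpha> i \<omega>) (k' - (m - 1))) \<in> borel_measurable M"
        using less Suc by simp
      show ?thesis unfolding Suc ycomp.simps if_not_P[OF False]
        by (intro borel_measurable_add borel_measurable_max borel_measurable_const m1 m2 xm)
    qed
  qed
qed

theorem mainTheorem4:
  fixes M :: "'s measure" and \<alpha> :: "nat \<Rightarrow> 's \<Rightarrow> real"
    and m :: nat and b c :: real
  assumes "prob_space M"
    and "m \<ge> 1" and "b > 0" and "c > 0"
    and "\<And>i. i \<ge> 1 \<Longrightarrow> \<alpha> i \<in> borel_measurable M"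
    and "prob_space.indep_vars M (\<lambda>_. borel) \<alpha> {1..}"
    and "\<And>i. i \<ge> 1 \<Longrightarrow> distr M borel (\<alpha> i) = distr M borel (\<alpha> 1)"
    and "\<And>i. i \<ge> 1 \<Longrightarrow> AE \<omega> in M. \<alpha> i \<omega> \<ge> 0"
    and "integrable M (\<alpha> 1)"
    and "integrable M (\<lambda>\<omega>. (\<alpha> 1 \<omega>)\<^sup>2)"
  shows "AE \<omega> in M. (\<lambda>k. ycomp m b c (\<lambda>i. \<alpha> i \<omega>) k / real k)
            \<longlonglongrightarrow> max (integral\<^sup>L M (\<alpha> 1)) (max b ((b + c) / real m))
       \<and> (\<lambda>k. integral\<^sup>L M (\<lambda>\<omega>. ycomp m b c (\<lambda>i. \<alpha> i \<omega>) k) / real k)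
            \<longlonglongrightarrow> max (integral\<^sup>L M (\<alpha> 1)) (max b ((b + c) / real m))"
proof -
  note ps = assms(1) and m1 = assms(2) and b0 = assms(3) and c0 = assms(4)
    and meas = assms(5) and ind = assms(6) and dist = assms(7) and nn = assms(8)
    and i1 = assms(9) and i2 = assms(10)
  interpret prob_space M by (rule ps)
  define a where "a = integral\<^sup>L M (\<alpha> 1)"
  define \<mu> where "\<mu> = max b ((b + c) / real m)"
  define lam where "lam = max a \<mu>"
  have tr: "integrable M (\<lambda>\<omega>. g (\<alpha> i \<omega>)) \<longleftrightarrow> integrable M (\<lambda>\<omega>. g (\<alpha> 1 \<omega>))"
    "integral\<^sup>L M (\<lambda>\<omega>. g (\<alpha> i \<omega>)) = integral\<^sup>L M (\<lambda>\<omega>. g (\<alpha> 1 \<omega>))"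
    if i: "i \<ge> 1" and g: "g \<in> borel_measurable borel" for i and g :: "real \<Rightarrow> real"
  proof -
    have mi: "\<alpha> i \<in> measurable M borel" using meas i by simp
    have m1': "\<alpha> 1 \<in> measurable M borel" using meas by simp
    show "integrable M (\<lambda>\<omega>. g (\<alpha> i \<omega>)) \<longleftrightarrow> integrable M (\<lambda>\<omega>. g (\<alpha> 1 \<omega>))"
      using integrable_distr_eq[OF mi g] integrable_distr_eq[OF m1' g] dist[OF i] by simp
    show "integral\<^sup>L M (\<lambda>\<omega>. g (\<alpha> i \<omega>)) = integral\<^sup>L M (\<lambda>\<omega>. g (\<alpha> 1 \<omega>))"
      using integral_distr[OF mi g] integral_distr[OF m1' g] dist[OF i] by simp
  qed
  have int1: "integrable M (\<alpha> i)" if "i \<ge> 1" for i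
    using tr(1)[OF that, of "\<lambda>x. x"] i1 by simp
  have int2: "integrable M (\<lambda>\<omega>. (\<alpha> i \<omega>)\<^sup>2)" if "i \<ge> 1" for i
    using tr(1)[OF that, of "\<lambda>x. x\<^sup>2"] i2 by simp
  have mean: "expectation (\<alpha> i) = a" if "i \<ge> 1" for i
    using tr(2)[OF that, of "\<lambda>x. x"] unfolding a_def by simp
  have var: "expectation (\<lambda>\<omega>. (\<alpha> i \<omega> - a)\<^sup>2) = expectation (\<lambda>\<omega>. (\<alpha> 1 \<omega> - a)\<^sup>2)" if "i \<ge> 1" for i
    using tr(2)[OF that, of "\<lambda>x. (x - a)\<^sup>2"] by simp
  have sq: "AE \<omega> in M. (\<lambda>n. (\<Sum>i\<in>{1..n^2}. \<alpha> i \<omega>) / real (n^2)) \<longlonglongrightarrow> a"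
    by (rule slln_sq[OF meas ind int1 int2 mean var]) auto
  have nnall: "AE \<omega> in M. \<forall>i. i \<ge> 1 \<longrightarrow> \<alpha> i \<omega> \<ge> 0"
    unfolding AE_all_countable using nn by auto
  have xlim: "AE \<omega> in M. (\<lambda>k. xarr (\<lambda>i. \<alpha> i \<omega>) k / real k) \<longlonglongrightarrow> a"
    using sq nnall
  proof eventually_elim
    case (elim \<omega>)
    have xm: "xarr (\<lambda>i. \<alpha> i \<omega>) i \<le> xarr (\<lambda>i. \<alpha> i \<omega>) j" if "i \<le> j" for i j
      using that
    proof (induction j)
      case 0 then show ?case by simp
    next
      case (Suc j) then show ?case using elim(2) by (cases "i = Suc j") (auto intro: add_increasing2)
    qed
    show ?case
    proof (rule sq_sandwich)
      show "xarr (\<lambda>i. \<alpha> i \<omega>) i \<le> xarr (\<lambda>i. \<alpha> i \<omega>) j" if "i \<le> j" for i j using xm that .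
      show "0 \<le> xarr (\<lambda>i. \<alpha> i \<omega>) i" for i using xm[of 0 i] by simp
      show "(\<lambda>n. xarr (\<lambda>i. \<alpha> i \<omega>) (n\<^sup>2) / real (n\<^sup>2)) \<longlonglongrightarrow> a"
        using elim(1) unfolding xarr_sum .
    qed
  qed
  have ylim: "AE \<omega> in M. (\<lambda>k. ycomp m b c (\<lambda>i. \<alpha> i \<omega>) k / real k) \<longlonglongrightarrow> lam"
    using xlim by eventually_elim (unfold lam_def \<mu>_def, rule det_limit[OF m1 b0 c0])
  define y where "y k \<omega> = ycomp m b c (\<lambda>i. \<alpha> i \<omega>) k" for k \<omega>
  define x where "x k \<omega> = xarr (\<lambda>i. \<alpha> i \<omega>) k" for k \<omega>
  define G where "G k \<omega> = (y k \<omega> - x k \<omega>) / real k" for k \<omega>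
  have ym: "y k \<in> borel_measurable M" for k unfolding y_def by (rule ycomp_meas[OF meas])
  have xm: "x k \<in> borel_measurable M" for k unfolding x_def xarr_sum
    by (intro borel_measurable_sum meas) auto
  have Gm: "G k \<in> borel_measurable M" for k unfolding G_def using ym xm by measurable
  have xint: "integrable M (x k)" for k unfolding x_def xarr_sum
    by (intro Bochner_Integration.integrable_sum int1) auto
  have xE: "integral\<^sup>L M (x k) = real k * a" for k unfolding x_def xarr_sum
    using int1 mean by (simp add: Bochner_Integration.integral_sum)
  have Glim: "AE \<omega> in M. (\<lambda>k. G k \<omega>) \<longlonglongrightarrow> lam - a"
    using xlim ylim
  proof eventually_elim
    case (elim \<omega>)
    have "(\<lambda>k. y k \<omega> / real k - x k \<omega> / real k) \<longlonglongrightarrow> lam - a"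
      using elim unfolding x_def y_def by (intro tendsto_diff)
    then show ?case unfolding G_def by (simp add: diff_divide_distrib)
  qed
  have Gb: "AE \<omega> in M. norm (G k \<omega>) \<le> \<mu> + b + c" for k
    using nnall
  proof eventually_elim
    case (elim \<omega>)
    have \<mu>b: "\<mu> \<ge> b" unfolding \<mu>_def by simp
    have \<mu>m: "\<mu> * real m \<ge> b + c"
    proof -
      have "(b + c) / real m \<le> \<mu>" unfolding \<mu>_def by simp
      then show ?thesis using m1 by (simp add: field_simps)
    qed
    show ?case
    proof (cases k)
      case 0 then show ?thesis using \<mu>b b0 c0 by (simp add: G_def)
    next
      case (Suc k')
      have kp: "real k \<ge> 1" using Suc by simp
      have lo: "x k \<omega> + b \<le> y k \<omega>" unfolding x_def y_def Suc by (rule y_ge_x)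
      have up: "y k \<omega> \<le> x k \<omega> + \<mu> * real k + b + c"
        unfolding x_def y_def by (rule y_upper2[OF m1 b0 c0 \<mu>b \<mu>m]) (use elim in auto)
      have "G k \<omega> \<ge> 0" unfolding G_def using lo b0 kp by simp
      moreover have "G k \<omega> \<le> \<mu> + (b + c) / real k"
      proof -
        have "G k \<omega> \<le> (\<mu> * real k + b + c) / real k"
          unfolding G_def using up kp by (intro divide_right_mono) auto
        also have "\<dots> = \<mu> + (b + c) / real k" using kp by (simp add: field_simps)
        finally show ?thesis .
      qed
      moreover have "(b + c) / real k \<le> b + c" using kp b0 c0
        by (simp add: divide_le_eq mult_le_cancel_left1)
      ultimately show ?thesis by simp
    qed
  qed
  have GE: "(\<lambda>k. integral\<^sup>L M (G k)) \<longlonglongrightarrow> integral\<^sup>L M (\<lambda>_. lam - a)"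
    by (rule integral_dominated_convergence[OF _ Gm _ Glim Gb]) auto
  have Gint: "integrable M (G k)" for k
    by (rule integrable_dominated_convergence2[OF _ Gm _ Glim Gb]) auto
  have yE: "integral\<^sup>L M (y k) / real k = integral\<^sup>L M (G k) + a" if "k \<ge> 1" for k
  proof -
    have eq: "y k = (\<lambda>\<omega>. real k * G k \<omega> + x k \<omega>)" using that unfolding G_def by (auto simp: field_simps)
    have "integral\<^sup>L M (y k) = real k * integral\<^sup>L M (G k) + real k * a"
      unfolding eq using Gint xint xE by simp
    then show ?thesis using that by (simp add: field_simps)
  qed
  have "(\<lambda>k. integral\<^sup>L M (G k) + a) \<longlonglongrightarrow> lam - a + a"
    using GE by (intro tendsto_add) (auto simp: prob_space)
  then have "(\<lambda>k. integral\<^sup>L M (G k) + a) \<longlonglongrightarrow> lam" by simp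
  then have "(\<lambda>k. integral\<^sup>L M (y k) / real k) \<longlonglongrightarrow> lam"
    proof (rule Lim_transform_eventually)
    show "\<forall>\<^sub>F k in sequentially. integral\<^sup>L M (G k) + a = integral\<^sup>L M (y k) / real k"
      using eventually_ge_at_top[of 1] by eventually_elim (simp add: yE)
  qed
  then show ?thesis using ylim unfolding lam_def \<mu>_def a_def y_def by simp
qed

end
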